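(* Let $\mathbf{A},\mathbf{B}\in\mathbb{R}^{d\times d}$ be symmetric positive definite matrices with $\|\mathbf{A}-\mathbf{B}\|_2\le\varepsilon_1\|\mathbf{A}\|_2$, and let $\mathbf{r}_1,\mathbf{r}_2\in\mathbb{R}^d$ be unit vectors with $\|\mathbf{r}_1-\mathbf{r}_2\|_2\le\varepsilon_2$. If $\frac{\lambda_{\max}(\mathbf{A})}{\lambda_{\min}(\mathbf{A})}(\varepsilon_2+\varepsilon_1)\le\frac12$, then $$\Big\|\frac{\mathbf{A}\mathbf{r}_1}{\|\mathbf{A}\mathbf{r}_1\|_2}-\frac{\mathbf{B}\mathbf{r}_2}{\|\mathbf{B}\mathbf{r}_2\|_2}\Big\|_2\le4\frac{\lambda_{\max}(\mathbf{A})}{\lambda_{\min}(\mathbf{A})}(\varepsilon_2+\varepsilon_1).$$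
   Context: $\|\cdot\|_2$ on matrices is the operator norm; $\lambda_{\max}(\mathbf{A}),\lambda_{\min}(\mathbf{A})$ are the largest and smallest eigenvalues of $\mathbf{A}$. *)

theory Defs
  imports "HOL-Analysis.Analysis"
begin

text \<open>Real square matrices are rendered as real^'n^'n (dimension d = CARD('n)).\<close>

definition sym_pos_def_mat :: "real^'n^'n \<Rightarrow> bool" where
  "sym_pos_def_mat A \<longleftrightarrow> transpose A = A \<and> (\<forall>x. x \<noteq> 0 \<longrightarrow> x \<bullet> (A *v x) > 0)"

definition op_norm :: "real^'n^'m \<Rightarrow> real" where
  "op_norm A = onorm (\<lambda>x. A *v x)"

definition eigenvalues :: "real^'n^'n \<Rightarrow> real set" where
  "eigenvalues A = {l. \<exists>v. v \<noteq> 0 \<and> A *v v = l *\<^sub>R v}"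

definition lambda_max :: "real^'n^'n \<Rightarrow> real" where
  "lambda_max A = Max (eigenvalues A)"

definition lambda_min :: "real^'n^'n \<Rightarrow> real" where
  "lambda_min A = Min (eigenvalues A)"

end

theory Submission
  imports Defs
begin

lemma quad_nonneg_zero:
  fixes a k :: real
  assumes "\<And>t. 0 \<le> 2 * t * a + t^2 * k" "k \<ge> 0" "a \<ge> 0"
  shows "a = 0"
proof (rule ccontr)
  assume "a \<noteq> 0"
  then have ap: "a > 0" using assms by simp
  have "0 \<le> 2 * (- a/(k+1)) * a + (- a/(k+1))^2 * k" using assms(1) .
  moreover have "2 * (- a/(k+1)) * a + (- a/(k+1))^2 * k = a^2 * (-(k+2)) / (k+1)^2"
  proof -
    have "k + 1 > 0" using assms(2) by simp
    then have "(k+1)^2 \<noteq> 0" by simp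
    then show ?thesis by (simp add: divide_simps) (simp add: algebra_simps power2_eq_square)
  qed
  moreover have "a^2 * (-(k+2)) / (k+1)^2 < 0"
    using ap assms(2) by (intro divide_neg_pos) (auto intro: mult_pos_neg)
  ultimately show False by linarith
qed

lemma max_eigen:
  fixes f :: "'a::real_inner \<Rightarrow> 'a"
  assumes lin: "linear f" and sym: "\<And>x y. f x \<bullet> y = x \<bullet> f y"
    and le: "\<And>x. x \<bullet> f x \<le> c * (x \<bullet> x)"
    and eq: "x0 \<bullet> f x0 = c * (x0 \<bullet> x0)"
  shows "f x0 = c *\<^sub>R x0"
proof -
  define y where "y = c *\<^sub>R x0 - f x0"
  define k where "k = c * (y \<bullet> y) - y \<bullet> f y"
  have k: "k \<ge> 0" using le[of y] by (simp add: k_def)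
  have "0 \<le> 2 * t * (y \<bullet> y) + t^2 * k" for t
  proof -
    have "(x0 + t *\<^sub>R y) \<bullet> f (x0 + t *\<^sub>R y) \<le> c * ((x0 + t *\<^sub>R y) \<bullet> (x0 + t *\<^sub>R y))"
      by (rule le)
    moreover have "f (x0 + t *\<^sub>R y) = f x0 + t *\<^sub>R f y"
      using lin by (simp add: linear_add real_vector.linear_scale)
    moreover have "x0 \<bullet> f y = f x0 \<bullet> y" using sym[of x0 y] by simp
    moreover have "y \<bullet> f x0 = f x0 \<bullet> y" by (simp add: inner_commute)
    ultimately have "x0 \<bullet> f x0 + 2 * t * (f x0 \<bullet> y) + t^2 * (y \<bullet> f y)
        \<le> c * (x0 \<bullet> x0) + 2 * t * c * (x0 \<bullet> y) + t^2 * c * (y \<bullet> y)"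
      by (simp add: inner_add_left inner_add_right inner_commute[of y x0] algebra_simps power2_eq_square)
    then have "0 \<le> 2 * t * ((c *\<^sub>R x0 - f x0) \<bullet> y) + t^2 * k"
      using eq by (simp add: k_def inner_diff_left algebra_simps)
    then show ?thesis by (simp add: y_def)
  qed
  then have "y \<bullet> y = 0" using quad_nonneg_zero k by (meson inner_ge_zero)
  then show ?thesis by (simp add: y_def)
qed

lemma psd_cs:
  fixes f :: "'a::real_inner \<Rightarrow> 'a"
  assumes lin: "linear f" and sym: "\<And>x y. f x \<bullet> y = x \<bullet> f y"
    and pos: "\<And>x. 0 \<le> x \<bullet> f x"
  shows "(y \<bullet> f x)^2 \<le> (x \<bullet> f x) * (y \<bullet> f y)"
proof -
  define p where "p = x \<bullet> f x"
  define q where "q = y \<bullet> f x"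
  define r where "r = y \<bullet> f y"
  have *: "0 \<le> p + 2 * t * q + t^2 * r" for t
  proof -
    have "0 \<le> (x + t *\<^sub>R y) \<bullet> f (x + t *\<^sub>R y)" by (rule pos)
    moreover have "f (x + t *\<^sub>R y) = f x + t *\<^sub>R f y"
      using lin by (simp add: linear_add real_vector.linear_scale)
    moreover have "x \<bullet> f y = y \<bullet> f x" using sym[of y x] by (simp add: inner_commute)
    ultimately show ?thesis
      by (simp add: p_def q_def r_def inner_add_left inner_add_right algebra_simps power2_eq_square)
  qed
  have r0: "r \<ge> 0" using pos by (simp add: r_def)
  show ?thesis
  proof (cases "r = 0")
    case True
    have "q = 0"
    proof (rule ccontr)
      assume "q \<noteq> 0"
      have "0 \<le> p + 2 * (-(p+1)/(2*q)) * q + (-(p+1)/(2*q))^2 * r" by (rule *)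
      then show False using True \<open>q \<noteq> 0\<close> by (simp add: field_simps)
    qed
    then show ?thesis using True by (simp add: q_def r_def)
  next
    case False
    then have rp: "r > 0" using r0 by simp
    have "0 \<le> p + 2 * (-q/r) * q + (-q/r)^2 * r" by (rule *)
    also have "\<dots> = (p * r - q^2) / r" using rp by (simp add: field_simps power2_eq_square)
    finally have "0 \<le> p * r - q^2" using rp by (simp add: zero_le_divide_iff)
    then show ?thesis by (simp add: p_def q_def r_def)
  qed
qed

lemma normalized_diff:
  fixes u v :: "'a::real_normed_vector"
  assumes "u \<noteq> 0"
  shows "norm ((1 / norm u) *\<^sub>R u - (1 / norm v) *\<^sub>R v) \<le> 2 * norm (u - v) / norm u"
proof (cases "v = 0")
  case True
  then show ?thesis using assms by simp
next
  case False
  have nu: "norm u > 0" "norm v > 0" using assms False by auto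
  have "(1 / norm u) *\<^sub>R u - (1 / norm v) *\<^sub>R v
      = (1 / norm u) *\<^sub>R (u - v) + ((1 / norm u) - (1 / norm v)) *\<^sub>R v"
    by (simp add: algebra_simps)
  then have "norm ((1 / norm u) *\<^sub>R u - (1 / norm v) *\<^sub>R v)
      \<le> norm ((1 / norm u) *\<^sub>R (u - v)) + norm (((1 / norm u) - (1 / norm v)) *\<^sub>R v)"
    by (metis norm_triangle_ineq)
  also have "norm ((1 / norm u) *\<^sub>R (u - v)) = norm (u - v) / norm u" using nu by simp
  also have "norm (((1 / norm u) - (1 / norm v)) *\<^sub>R v) = \<bar>norm v - norm u\<bar> / norm u"
  proof -
    have e: "(1 / norm u) - (1 / norm v) = (norm v - norm u) / (norm u * norm v)"
      using nu by (simp add: field_simps)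
    have "norm (((1 / norm u) - (1 / norm v)) *\<^sub>R v) = \<bar>(norm v - norm u) / (norm u * norm v)\<bar> * norm v"
      unfolding e by simp
    also have "\<bar>(norm v - norm u) / (norm u * norm v)\<bar> * norm v = \<bar>norm v - norm u\<bar> / norm u"
      using nu by (simp add: abs_divide abs_mult)
    finally show ?thesis .
  qed
  also have "\<bar>norm v - norm u\<bar> / norm u \<le> norm (u - v) / norm u"
    using nu by (intro divide_right_mono) (metis norm_triangle_ineq3 norm_minus_commute, simp)
  finally show ?thesis by (simp add: field_simps)
qed

lemma finite_eigenvalues:
  fixes A :: "real^'n^'n"
  assumes symA: "transpose A = A"
  shows "finite (eigenvalues A)"
proof -
  have symf: "\<And>x y. (A *v x) \<bullet> y = x \<bullet> (A *v y)"
    by (metis dot_lmul_matrix vector_transpose_matrix symA)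
  define v where "v l = (SOME v. v \<noteq> 0 \<and> A *v v = l *\<^sub>R v)" for l
  have v: "v l \<noteq> 0 \<and> A *v v l = l *\<^sub>R v l" if "l \<in> eigenvalues A" for l
    using that unfolding eigenvalues_def v_def by (rule CollectE) (rule someI_ex)
  have inj: "inj_on v (eigenvalues A)"
  proof (rule inj_onI)
    fix l l' assume l: "l \<in> eigenvalues A" "l' \<in> eigenvalues A" "v l = v l'"
    then have "l *\<^sub>R v l = l' *\<^sub>R v l" using v[of l] v[of l'] by metis
    then show "l = l'" using v[OF l(1)] by (simp add: scaleR_cancel_right)
  qed
  have "pairwise orthogonal (v ` eigenvalues A)"
  proof (rule pairwiseI, clarify)
    fix l l' assume l: "l \<in> eigenvalues A" "l' \<in> eigenvalues A" "v l \<noteq> v l'"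
    then have ne: "l \<noteq> l'" by auto
    have "l * (v l \<bullet> v l') = (A *v v l) \<bullet> v l'" using v[OF l(1)] by simp
    also have "\<dots> = v l \<bullet> (A *v v l')" by (rule symf)
    also have "\<dots> = l' * (v l \<bullet> v l')" using v[OF l(2)] by simp
    finally have "(l - l') * (v l \<bullet> v l') = 0" by (simp add: algebra_simps)
    then show "orthogonal (v l) (v l')" using ne by (simp add: orthogonal_def)
  qed
  moreover have "0 \<notin> v ` eigenvalues A" using v by auto
  ultimately have "independent (v ` eigenvalues A)" by (rule pairwise_orthogonal_independent)
  then have "finite (v ` eigenvalues A)" by (rule finiteI_independent)
  then show ?thesis using inj finite_imageD by blast
qed

theorem lemma1:
  fixes A B :: "real^'n^'n" and r1 r2 :: "real^'n" and eps1 eps2 :: real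
  assumes "sym_pos_def_mat A" and "sym_pos_def_mat B"
    and "op_norm (A - B) \<le> eps1 * op_norm A"
    and "norm r1 = 1" and "norm r2 = 1"
    and "norm (r1 - r2) \<le> eps2"
    and "lambda_max A / lambda_min A * (eps2 + eps1) \<le> 1 / 2"
  shows "norm ((1 / norm (A *v r1)) *\<^sub>R (A *v r1) - (1 / norm (B *v r2)) *\<^sub>R (B *v r2))
           \<le> 4 * (lambda_max A / lambda_min A) * (eps2 + eps1)"
proof -
  have symA: "transpose A = A" and posA: "\<And>x. x \<noteq> 0 \<Longrightarrow> x \<bullet> (A *v x) > 0"
    using assms(1) unfolding sym_pos_def_mat_def by auto
  have pos0: "x \<bullet> (A *v x) \<ge> 0" for x
    using posA[of x] by (cases "x = 0") auto
  have symf: "\<And>x y. (A *v x) \<bullet> y = x \<bullet> (A *v y)"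
    by (metis dot_lmul_matrix vector_transpose_matrix symA)
  have lin: "linear ((*v) A)"
    by (rule bounded_linear.linear[OF matrix_vector_mul_bounded_linear])
  have linm: "linear (\<lambda>x. - (A *v x))" using lin by (rule linear_compose_neg)
  have fin: "finite (eigenvalues A)" by (rule finite_eigenvalues[OF symA])
  define g where "g x = x \<bullet> (A *v x)" for x
  have hom: "g (c *\<^sub>R x) = c^2 * g x" for c x
    by (simp add: g_def matrix_vector_mult_scaleR power2_eq_square)
  have cont: "continuous_on (sphere 0 1) g"
    unfolding g_def
    by (intro continuous_intros linear_continuous_on matrix_vector_mul_bounded_linear)
  have cs: "compact (sphere (0::real^'n) 1)" by simp
  have ne: "sphere (0::real^'n) 1 \<noteq> {}" using assms(4) by auto
  obtain xM where xM: "xM \<in> sphere 0 1" "\<And>y. y \<in> sphere 0 1 \<Longrightarrow> g y \<le> g xM"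
    using continuous_attains_sup[OF cs ne cont] by blast
  obtain xm where xm: "xm \<in> sphere 0 1" "\<And>y. y \<in> sphere 0 1 \<Longrightarrow> g xm \<le> g y"
    using continuous_attains_inf[OF cs ne cont] by blast
  define M where "M = g xM"
  define m where "m = g xm"
  have scale: "x = norm x *\<^sub>R ((1 / norm x) *\<^sub>R x)" if "x \<noteq> 0" for x :: "real^'n"
    using that by simp
  have upper: "g x \<le> M * (x \<bullet> x)" for x
  proof (cases "x = 0")
    case True then show ?thesis by (simp add: g_def)
  next
    case False
    have u: "(1 / norm x) *\<^sub>R x \<in> sphere 0 1" using False by simp
    have "g x = (norm x)^2 * g ((1 / norm x) *\<^sub>R x)" by (subst scale[OF False]) (rule hom)
    also have "\<dots> \<le> (norm x)^2 * M" unfolding M_def using xM(2)[OF u] by (simp add: mult_left_mono)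
    finally show ?thesis by (simp add: power2_norm_eq_inner mult.commute)
  qed
  have lower: "m * (x \<bullet> x) \<le> g x" for x
  proof (cases "x = 0")
    case True then show ?thesis by (simp add: g_def)
  next
    case False
    have u: "(1 / norm x) *\<^sub>R x \<in> sphere 0 1" using False by simp
    have "g x = (norm x)^2 * g ((1 / norm x) *\<^sub>R x)" by (subst scale[OF False]) (rule hom)
    moreover have "(norm x)^2 * m \<le> (norm x)^2 * g ((1 / norm x) *\<^sub>R x)"
      unfolding m_def using xm(2)[OF u] by (simp add: mult_left_mono)
    ultimately show ?thesis by (simp add: power2_norm_eq_inner mult.commute)
  qed
  have xM0: "xM \<noteq> 0" and xm0: "xm \<noteq> 0" using xM(1) xm(1) by auto
  have xMn: "xM \<bullet> xM = 1" "xm \<bullet> xm = 1" using xM(1) xm(1)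
    by (simp_all add: power2_norm_eq_inner[symmetric])
  have eM: "A *v xM = M *\<^sub>R xM"
    by (rule max_eigen[OF lin symf]) (use upper xMn in \<open>auto simp: g_def M_def\<close>)
  have "- (A *v xm) = (- m) *\<^sub>R xm"
  proof (rule max_eigen[OF linm])
    show "\<And>x y. - (A *v x) \<bullet> y = x \<bullet> - (A *v y)" using symf by simp
    show "\<And>x. x \<bullet> - (A *v x) \<le> - m * (x \<bullet> x)" using lower by (simp add: g_def)
    show "xm \<bullet> - (A *v xm) = - m * (xm \<bullet> xm)" using xMn by (simp add: g_def m_def)
  qed
  then have em: "A *v xm = m *\<^sub>R xm" by simp
  have Mev: "M \<in> eigenvalues A" using eM xM0 unfolding eigenvalues_def by auto
  have mev: "m \<in> eigenvalues A" using em xm0 unfolding eigenvalues_def by auto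
  have Mle: "M \<le> lambda_max A" unfolding lambda_max_def using fin Mev by simp
  have mge: "lambda_min A \<le> m" unfolding lambda_min_def using fin mev by simp
  have lmin_ev: "lambda_min A \<in> eigenvalues A" unfolding lambda_min_def using fin mev
    by (intro Min_in) auto
  have lmin_pos: "lambda_min A > 0"
  proof -
    obtain w where w: "w \<noteq> 0" "A *v w = lambda_min A *\<^sub>R w" using lmin_ev unfolding eigenvalues_def by auto
    have "0 < w \<bullet> (A *v w)" using posA[OF w(1)] .
    also have "\<dots> = lambda_min A * (w \<bullet> w)" using w(2) by simp
    finally show ?thesis using w(1) inner_ge_zero[of w] by (auto simp: zero_less_mult_iff)
  qed
  have M0: "M \<ge> 0" unfolding M_def g_def by (rule pos0)
  have Abound: "norm (A *v x) \<le> M * norm x" for x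
  proof -
    define n where "n = (A *v x) \<bullet> (A *v x)"
    have "((A *v x) \<bullet> (A *v x))^2 \<le> (x \<bullet> (A *v x)) * ((A *v x) \<bullet> (A *v (A *v x)))"
      by (rule psd_cs[OF lin symf pos0])
    also have "\<dots> \<le> (M * (x \<bullet> x)) * (M * ((A *v x) \<bullet> (A *v x)))"
      using upper[of x] upper[of "A *v x"] pos0[of x] pos0[of "A *v x"] unfolding g_def
      by (intro mult_mono) auto
    finally have "n * n \<le> (M^2 * (x \<bullet> x)) * n"
      unfolding n_def by (simp only: power2_eq_square mult_ac)
    moreover have "n \<ge> 0" by (simp add: n_def)
    ultimately have "n \<le> M^2 * (x \<bullet> x)"
    proof (cases "n = 0")
      case True then show ?thesis by (simp add: M0)
    next
      case False
      with \<open>n \<ge> 0\<close> have "n > 0" by simp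
      with \<open>n * n \<le> (M^2 * (x \<bullet> x)) * n\<close> show ?thesis
        by (simp add: mult_le_cancel_right_pos[OF \<open>n > 0\<close>])
    qed
    moreover have "(norm (A *v x))^2 = n" unfolding n_def by (rule power2_norm_eq_inner)
    moreover have "(M * norm x)^2 = M^2 * (x \<bullet> x)"
      unfolding power_mult_distrib power2_norm_eq_inner ..
    ultimately have "(norm (A *v x))^2 \<le> (M * norm x)^2" by simp
    moreover have "0 \<le> M * norm x" using M0 by simp
    ultimately show ?thesis by (rule power2_le_imp_le)
  qed
  have opA: "op_norm A \<le> M" unfolding op_norm_def by (rule onorm_le) (rule Abound)
  have Ar1: "m \<le> norm (A *v r1)"
  proof -
    have "m = m * (r1 \<bullet> r1)" using assms(4) by (simp add: power2_norm_eq_inner[symmetric])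
    also have "\<dots> \<le> r1 \<bullet> (A *v r1)" using lower[of r1] by (simp add: g_def)
    also have "\<dots> \<le> norm r1 * norm (A *v r1)" by (rule norm_cauchy_schwarz)
    finally show ?thesis using assms(4) by simp
  qed
  have onA: "norm (A *v x) \<le> op_norm A * norm x" for x
    unfolding op_norm_def by (rule onorm[OF matrix_vector_mul_bounded_linear])
  have onAB: "norm ((A - B) *v x) \<le> op_norm (A - B) * norm x" for x
    unfolding op_norm_def by (rule onorm[OF matrix_vector_mul_bounded_linear])
  have opAB0: "op_norm (A - B) \<ge> 0"
    unfolding op_norm_def by (rule onorm_pos_le[OF matrix_vector_mul_bounded_linear])
  have normAr1: "norm (A *v r1) \<ge> lambda_min A" using Ar1 mge by simp
  have opApos: "op_norm A > 0" using onA[of r1] assms(4) normAr1 lmin_pos by simp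
  have "eps1 * op_norm A \<ge> 0" using opAB0 assms(3) by linarith
  then have e1: "eps1 \<ge> 0" using opApos by (simp add: zero_le_mult_iff)
  have e2: "eps2 \<ge> 0" using assms(6) norm_ge_zero[of "r1 - r2"] by linarith
  define e where "e = eps2 + eps1"
  have e0: "e \<ge> 0" using e1 e2 by (simp add: e_def)
  have diff: "norm (A *v r1 - B *v r2) \<le> op_norm A * e"
  proof -
    have "A *v r1 - B *v r2 = A *v (r1 - r2) + (A - B) *v r2"
      by (simp add: matrix_vector_mult_diff_distrib matrix_vector_mult_diff_rdistrib)
    then have "norm (A *v r1 - B *v r2) \<le> norm (A *v (r1 - r2)) + norm ((A - B) *v r2)"
      by (metis norm_triangle_ineq)
    also have "\<dots> \<le> op_norm A * eps2 + eps1 * op_norm A"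
    proof -
      have "norm (A *v (r1 - r2)) \<le> op_norm A * eps2"
      proof -
        have "op_norm A * norm (r1 - r2) \<le> op_norm A * eps2"
          using assms(6) opApos by (simp add: mult_left_mono)
        then show ?thesis using onA[of "r1 - r2"] by linarith
      qed
      moreover have "norm ((A - B) *v r2) \<le> eps1 * op_norm A"
        using onAB[of r2] assms(3,5) by simp
      ultimately show ?thesis by linarith
    qed
    finally show ?thesis by (simp add: e_def algebra_simps)
  qed
  have Ar1ne: "A *v r1 \<noteq> 0" using normAr1 lmin_pos by auto
  have "norm ((1 / norm (A *v r1)) *\<^sub>R (A *v r1) - (1 / norm (B *v r2)) *\<^sub>R (B *v r2))
      \<le> 2 * norm (A *v r1 - B *v r2) / norm (A *v r1)"
    by (rule normalized_diff[OF Ar1ne])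
  also have "\<dots> \<le> 2 * (op_norm A * e) / lambda_min A"
  proof (rule frac_le)
    show "0 \<le> 2 * (op_norm A * e)" using opApos e0 by simp
    show "2 * norm (A *v r1 - B *v r2) \<le> 2 * (op_norm A * e)" using diff by simp
  qed (use normAr1 lmin_pos in auto)
  also have "\<dots> \<le> 2 * (lambda_max A * e) / lambda_min A"
  proof -
    have "op_norm A * e \<le> lambda_max A * e" using opA Mle e0 by (simp add: mult_right_mono)
    then show ?thesis using lmin_pos by (simp add: divide_right_mono)
  qed
  also have "\<dots> \<le> 4 * (lambda_max A / lambda_min A) * e"
  proof -
    have "lambda_max A \<ge> 0" using Mle M0 by simp
    then have "0 \<le> lambda_max A / lambda_min A * e" using lmin_pos e0 by simp
    moreover have "2 * (lambda_max A * e) / lambda_min A = 2 * (lambda_max A / lambda_min A * e)"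
      by simp
    ultimately show ?thesis by linarith
  qed
  finally show ?thesis by (simp add: e_def)
qed

end
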